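(* Consider $\min_{x\in\mathbb{R}^p,z\in\mathbb{R}^N}F(x,z):=f(x,z)+g(x)+h(z)$, where: (i) $f$ is differentiable with $M$-Lipschitz joint gradient, i.e. $\|(\nabla_xf(x_1,z_1)-\nabla_xf(x_2,z_2),\nabla_zf(x_1,z_1)-\nabla_zf(x_2,z_2))\|\le M\|(x_1-x_2,z_1-z_2)\|$ for all arguments and some $M>0$, and $g:\mathbb{R}^p\to\mathbb{R}\cup\{\infty\}$, $h:\mathbb{R}^N\to\mathbb{R}\cup\{\infty\}$ are proper, lower semicontinuous and directionally differentiable; (ii) $F$ is bounded below; (iii) $g$ and $h$ are prox-bounded, i.e. $g+\frac\eta2\|\cdot\|^2$ and $h+\frac\eta2\|\cdot\|^2$ are bounded below for some $\eta>0$. Let $\{(x_t,z_t,\eta_t^x,\eta_t^z):t\ge0\}$ be generated by the following algorithm (GPALM), run indefinitely: fix an integer $r\ge1$, $\rho_1,\rho_2>1$, $\sigma_1,\sigma_2\in(0,1)$, $0<\underline\eta\le\overline\eta$, a starting point $(x_0,z_0)$, and $\hat\eta_0^x=\hat\eta_0^z=1$. At iteration $t$, for $l=0,1,2,\dots$ set $\eta_t^x=\rho_1^l\hat\eta_t^x$, $\eta_t^z=\rho_2^l\hat\eta_t^z$ and compute $$x_{t+1}\in\operatorname{Prox}_{g/\eta_t^x}\Big(x_t-\tfrac1{\eta_t^x}\nabla_xf(x_t,z_t)\Big),\quad z_{t+1}\in\operatorname{Prox}_{h/\eta_t^z}\Big(z_t-\tfrac1{\eta_t^z}\nabla_zf(x_{t+1},z_t)\Big),$$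 stopping at the first $l$ for which $$F(x_{t+1},z_{t+1})\le\max\{F(x_{t-r+1},z_{t-r+1}),\dots,F(x_t,z_t)\}-\tfrac{\sigma_1}2\eta_t^x\|x_{t+1}-x_t\|^2-\tfrac{\sigma_2}2\eta_t^z\|z_{t+1}-z_t\|^2$$ (only indices $\ge0$ in the maximum). Then set $$\hat\eta_{t+1}^x=\min\Big\{\overline\eta,\max\Big\{\underline\eta,\tfrac{\langle x_{t+1}-x_t,\nabla_xf(x_{t+1},z_{t+1})-\nabla_xf(x_t,z_t)\rangle}{\|x_{t+1}-x_t\|^2}\Big\}\Big\},$$ $$\hat\eta_{t+1}^z=\min\Big\{\overline\eta,\max\Big\{\underline\eta,\tfrac{\langle z_{t+1}-z_t,\nabla_zf(x_{t+1},z_{t+1})-\nabla_zf(x_{t+1},z_t)\rangle}{\|z_{t+1}-z_t\|^2}\Big\}\Big\}.$$ If the generated sequence $\{(x_t,z_t)\}$ is bounded and $F$ is continuous on a compact set containing the sequence, then any accumulation point of $\{(x_t,z_t)\}$ is a d-stationary point of $F$.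
   Context: $\|\cdot\|$ is the Euclidean norm. $\operatorname{Prox}_{\phi/\eta}(y):=\operatorname{argmin}_u\{\tfrac1\eta\phi(u)+\tfrac12\|u-y\|^2\}$. The directional derivative of $F$ at $(x,z)$ in direction $(d_x,d_z)$ is $F'(x,z;d_x,d_z):=\lim_{\tau\to+0}\frac{F(x+\tau d_x,z+\tau d_z)-F(x,z)}{\tau}$ (possibly $+\infty$). A point $(x^*,z^* )$ is d-stationary for $F$ if $F$ is directionally differentiable there and $F'(x^*,z^*;d_x,d_z)\ge0$ for all $(d_x,d_z)\in\mathbb{R}^p\times\mathbb{R}^N$. *)

theory Defs
  imports "HOL-Analysis.Analysis" "HOL-Library.Extended_Real"
begin

text \<open>Extended-real valued functions phi : V -> R \<union> {+inf} are modelled as V \<Rightarrow> ereal.\<close>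

definition proper_fun :: "('v \<Rightarrow> ereal) \<Rightarrow> bool" where
  "proper_fun \<phi> \<longleftrightarrow> (\<forall>x. \<phi> x \<noteq> -\<infinity>) \<and> (\<exists>x. \<phi> x \<noteq> \<infinity>)"

definition lsc_fun :: "('v::topological_space \<Rightarrow> ereal) \<Rightarrow> bool" where
  "lsc_fun \<phi> \<longleftrightarrow> (\<forall>c. closed {x. \<phi> x \<le> c})"

definition has_dir_deriv :: "('v::real_normed_vector \<Rightarrow> ereal) \<Rightarrow> 'v \<Rightarrow> 'v \<Rightarrow> ereal \<Rightarrow> bool" where
  "has_dir_deriv \<phi> x d L \<longleftrightarrow>
     ((\<lambda>\<tau>::real. (\<phi> (x + \<tau> *\<^sub>R d) - \<phi> x) / ereal \<tau>) \<longlongrightarrow> L) (at_right 0)"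

definition dir_differentiable :: "('v::real_normed_vector \<Rightarrow> ereal) \<Rightarrow> 'v \<Rightarrow> bool" where
  "dir_differentiable \<phi> x \<longleftrightarrow> \<bar>\<phi> x\<bar> \<noteq> \<infinity> \<and> (\<forall>d. \<exists>L. L \<noteq> -\<infinity> \<and> has_dir_deriv \<phi> x d L)"

definition d_stationary :: "('v::real_normed_vector \<Rightarrow> ereal) \<Rightarrow> 'v \<Rightarrow> bool" where
  "d_stationary \<phi> x \<longleftrightarrow> dir_differentiable \<phi> x \<and> (\<forall>d L. has_dir_deriv \<phi> x d L \<longrightarrow> L \<ge> 0)"

definition prox :: "('v::real_normed_vector \<Rightarrow> ereal) \<Rightarrow> real \<Rightarrow> 'v \<Rightarrow> 'v set" where
  "prox \<phi> \<eta> y = {u. \<forall>v. ereal (1/\<eta>) * \<phi> u + ereal ((norm (u - y))\<^sup>2 / 2)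
                          \<le> ereal (1/\<eta>) * \<phi> v + ereal ((norm (v - y))\<^sup>2 / 2)}"

definition Fobj :: "('a \<Rightarrow> 'b \<Rightarrow> real) \<Rightarrow> ('a \<Rightarrow> ereal) \<Rightarrow> ('b \<Rightarrow> ereal) \<Rightarrow> 'a \<times> 'b \<Rightarrow> ereal" where
  "Fobj f g h = (\<lambda>(x, z). ereal (f x z) + g x + h z)"

definition clip :: "real \<Rightarrow> real \<Rightarrow> real \<Rightarrow> real" where
  "clip lo hi q = min hi (max lo q)"

end

theory Submission
  imports Defs
begin

lemma line_deriv:
  fixes f :: "'a::euclidean_space \<Rightarrow> 'b::euclidean_space \<Rightarrow> real"
  assumes f_grad: "\<And>x z. ((\<lambda>(u, v). f u v) has_derivative
                        (\<lambda>(du, dv). gx x z \<bullet> du + gz x z \<bullet> dv)) (at (x, z))"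
  shows "((\<lambda>s. f (x + s *\<^sub>R dx) (z + s *\<^sub>R dz)) has_real_derivative
           (gx (x + s *\<^sub>R dx) (z + s *\<^sub>R dz) \<bullet> dx + gz (x + s *\<^sub>R dx) (z + s *\<^sub>R dz) \<bullet> dz)) (at s)"
proof -
  have l: "((\<lambda>s. (x + s *\<^sub>R dx, z + s *\<^sub>R dz)) has_derivative (\<lambda>s. (s *\<^sub>R dx, s *\<^sub>R dz))) (at s)"
    by (auto intro!: derivative_eq_intros)
  have "((\<lambda>p. case p of (u, v) \<Rightarrow> f u v) \<circ> (\<lambda>s. (x + s *\<^sub>R dx, z + s *\<^sub>R dz)) has_derivative
     (\<lambda>p. case p of (du, dv) \<Rightarrow> gx (x + s *\<^sub>R dx) (z + s *\<^sub>R dz) \<bullet> du + gz (x + s *\<^sub>R dx) (z + s *\<^sub>R dz) \<bullet> dv) \<circ> (\<lambda>s. (s *\<^sub>R dx, s *\<^sub>R dz))) (at s)"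
    by (rule diff_chain_at[OF l f_grad])
  moreover have "(\<lambda>xa. xa * (gx (x + s *\<^sub>R dx) (z + s *\<^sub>R dz) \<bullet> dx) +
            xa * (gz (x + s *\<^sub>R dx) (z + s *\<^sub>R dz) \<bullet> dz)) = (*) (gx (x + s *\<^sub>R dx) (z + s *\<^sub>R dz) \<bullet> dx + gz (x + s *\<^sub>R dx) (z + s *\<^sub>R dz) \<bullet> dz)"
    by (auto simp: fun_eq_iff algebra_simps)
  ultimately show ?thesis
    unfolding has_field_derivative_def
    by (simp add: o_def)
qed

lemma descent:
  fixes f :: "'a::euclidean_space \<Rightarrow> 'b::euclidean_space \<Rightarrow> real"
  assumes f_grad: "\<And>x z. ((\<lambda>(u, v). f u v) has_derivative
                        (\<lambda>(du, dv). gx x z \<bullet> du + gz x z \<bullet> dv)) (at (x, z))"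
    and f_lip: "\<And>x1 z1 x2 z2. norm (gx x1 z1 - gx x2 z2, gz x1 z1 - gz x2 z2)
                               \<le> M * norm (x1 - x2, z1 - z2)"
  shows "f (x + dx) (z + dz) \<le> f x z + gx x z \<bullet> dx + gz x z \<bullet> dz + M / 2 * ((norm dx)\<^sup>2 + (norm dz)\<^sup>2)"
proof -
  define N where "N = (norm dx)\<^sup>2 + (norm dz)\<^sup>2"
  define D0 where "D0 = gx x z \<bullet> dx + gz x z \<bullet> dz"
  define \<theta> where "\<theta> = (\<lambda>s. f (x + s *\<^sub>R dx) (z + s *\<^sub>R dz) - s * D0 - M / 2 * s\<^sup>2 * N)"
  have der: "(\<theta> has_real_derivative
     (gx (x + s *\<^sub>R dx) (z + s *\<^sub>R dz) \<bullet> dx + gz (x + s *\<^sub>R dx) (z + s *\<^sub>R dz) \<bullet> dz - D0 - M * s * N)) (at s)" for s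
    unfolding \<theta>_def
    by (auto intro!: derivative_eq_intros line_deriv[OF f_grad])
  have nonpos: "gx (x + s *\<^sub>R dx) (z + s *\<^sub>R dz) \<bullet> dx + gz (x + s *\<^sub>R dx) (z + s *\<^sub>R dz) \<bullet> dz - D0 - M * s * N \<le> 0"
    if "0 \<le> s" for s
  proof -
    have "gx (x + s *\<^sub>R dx) (z + s *\<^sub>R dz) \<bullet> dx + gz (x + s *\<^sub>R dx) (z + s *\<^sub>R dz) \<bullet> dz - D0
        = (gx (x + s *\<^sub>R dx) (z + s *\<^sub>R dz) - gx x z, gz (x + s *\<^sub>R dx) (z + s *\<^sub>R dz) - gz x z) \<bullet> (dx, dz)"
      unfolding D0_def by (simp add: inner_diff_left)
    also have "\<dots> \<le> norm (gx (x + s *\<^sub>R dx) (z + s *\<^sub>R dz) - gx x z, gz (x + s *\<^sub>R dx) (z + s *\<^sub>R dz) - gz x z) * norm (dx, dz)"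
      by (rule norm_cauchy_schwarz)
    also have "\<dots> \<le> (M * norm ((x + s *\<^sub>R dx) - x, (z + s *\<^sub>R dz) - z)) * norm (dx, dz)"
      by (rule mult_right_mono[OF f_lip]) simp
    also have "norm ((x + s *\<^sub>R dx) - x, (z + s *\<^sub>R dz) - z) = s * norm (dx, dz)"
    proof -
      have "((x + s *\<^sub>R dx) - x, (z + s *\<^sub>R dz) - z) = s *\<^sub>R (dx, dz)" by simp
      moreover have "norm (s *\<^sub>R (dx, dz)) = s * norm (dx, dz)"
        using that by (simp only: norm_scaleR abs_of_nonneg)
      ultimately show ?thesis by metis
    qed
    also have "M * (s * norm (dx, dz)) * norm (dx, dz) = M * s * N"
      unfolding N_def by (simp add: norm_Pair power2_eq_square)
    finally show ?thesis by simp
  qed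
  have "\<theta> 1 \<le> \<theta> 0"
    apply (rule DERIV_nonpos_imp_nonincreasing[of 0 1])
     apply simp
    using der nonpos by blast
  then show ?thesis unfolding \<theta>_def D0_def N_def by simp
qed

lemma norm_sq_expand:
  fixes w G :: "'v::real_inner"
  shows "(norm (w + c *\<^sub>R G))\<^sup>2 = (norm w)\<^sup>2 + 2 * c * (G \<bullet> w) + c\<^sup>2 * (norm G)\<^sup>2"
  by (simp only: power2_norm_eq_inner) (simp add: inner_add_left inner_add_right inner_commute algebra_simps power2_eq_square)

lemma prox_ineq:
  fixes \<phi> :: "'v::real_inner \<Rightarrow> ereal"
  assumes u: "u \<in> prox \<phi> \<eta> (x - (1/\<eta>) *\<^sub>R G)" and eta: "\<eta> > 0" and nm: "\<And>y. \<phi> y \<noteq> -\<infinity>"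
  shows "\<phi> u \<le> \<phi> v + ereal (G \<bullet> (v - u) + \<eta>/2 * (norm (v - x))\<^sup>2 - \<eta>/2 * (norm (u - x))\<^sup>2)"
proof -
  define y where "y = x - (1/\<eta>) *\<^sub>R G"
  have H: "ereal (1/\<eta>) * \<phi> u + ereal ((norm (u - y))\<^sup>2 / 2)
                          \<le> ereal (1/\<eta>) * \<phi> v + ereal ((norm (v - y))\<^sup>2 / 2)"
    using u unfolding prox_def y_def by blast
  show ?thesis
  proof (cases "\<phi> v")
    case PInf then show ?thesis by simp
  next
    case MInf then show ?thesis using nm by simp
  next
    case (real b)
    show ?thesis
    proof (cases "\<phi> u")
      case PInf
      then show ?thesis using H real eta by simp
    next
      case MInf then show ?thesis using nm by simp
    next
      case (real a)
      have r: "a / \<eta> + (norm (u - y))\<^sup>2 / 2 \<le> b / \<eta> + (norm (v - y))\<^sup>2 / 2"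
        using H \<open>\<phi> u = ereal a\<close> \<open>\<phi> v = ereal b\<close> by simp
      have e1: "(norm (u - y))\<^sup>2 = (norm (u - x))\<^sup>2 + 2 * (1/\<eta>) * (G \<bullet> (u - x)) + (1/\<eta>)\<^sup>2 * (norm G)\<^sup>2"
        using norm_sq_expand[of "u - x" "1/\<eta>" G] unfolding y_def by (simp add: algebra_simps)
      have e2: "(norm (v - y))\<^sup>2 = (norm (v - x))\<^sup>2 + 2 * (1/\<eta>) * (G \<bullet> (v - x)) + (1/\<eta>)\<^sup>2 * (norm G)\<^sup>2"
        using norm_sq_expand[of "v - x" "1/\<eta>" G] unfolding y_def by (simp add: algebra_simps)
      have "\<eta> * (a / \<eta> + (norm (u - y))\<^sup>2 / 2) \<le> \<eta> * (b / \<eta> + (norm (v - y))\<^sup>2 / 2)"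
        using r eta by (simp add: mult_left_mono)
      moreover have "\<eta> * (a / \<eta> + (norm (u - y))\<^sup>2 / 2) = a + \<eta>/2 * (norm (u - x))\<^sup>2 + G \<bullet> (u - x) + \<eta>/2 * ((1/\<eta>)\<^sup>2 * (norm G)\<^sup>2)"
        unfolding e1 using eta by (simp add: field_simps)
      moreover have "\<eta> * (b / \<eta> + (norm (v - y))\<^sup>2 / 2) = b + \<eta>/2 * (norm (v - x))\<^sup>2 + G \<bullet> (v - x) + \<eta>/2 * ((1/\<eta>)\<^sup>2 * (norm G)\<^sup>2)"
        unfolding e2 using eta by (simp add: field_simps)
      ultimately have "a + \<eta>/2 * (norm (u - x))\<^sup>2 + G \<bullet> (u - x) \<le> b + \<eta>/2 * (norm (v - x))\<^sup>2 + G \<bullet> (v - x)"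
        by linarith
      then have "a \<le> b + (G \<bullet> (v - u) + \<eta>/2 * (norm (v - x))\<^sup>2 - \<eta>/2 * (norm (u - x))\<^sup>2)"
        by (simp add: inner_diff_right algebra_simps)
      then show ?thesis using \<open>\<phi> u = ereal a\<close> \<open>\<phi> v = ereal b\<close> by simp
    qed
  qed
qed

lemma descent_step:
  fixes f :: "'a::euclidean_space \<Rightarrow> 'b::euclidean_space \<Rightarrow> real"
  assumes f_grad: "\<And>x z. ((\<lambda>(u, v). f u v) has_derivative
                        (\<lambda>(du, dv). gx x z \<bullet> du + gz x z \<bullet> dv)) (at (x, z))"
    and f_lip: "\<And>x1 z1 x2 z2. norm (gx x1 z1 - gx x2 z2, gz x1 z1 - gz x2 z2)
                               \<le> M * norm (x1 - x2, z1 - z2)"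
    and nmg: "\<And>y. g y \<noteq> -\<infinity>" and nmh: "\<And>y. h y \<noteq> -\<infinity>"
    and u: "u \<in> prox g \<eta>1 (x - (1/\<eta>1) *\<^sub>R gx x z)"
    and w: "w \<in> prox h \<eta>2 (z - (1/\<eta>2) *\<^sub>R gz u z)"
    and e1: "\<eta>1 > 0" and e2: "\<eta>2 > 0"
    and m1: "M \<le> (1 - \<sigma>1) * \<eta>1" and m2: "M \<le> (1 - \<sigma>2) * \<eta>2"
  shows "Fobj f g h (u, w) \<le> Fobj f g h (x, z) - ereal (\<sigma>1 / 2 * \<eta>1 * (norm (u - x))\<^sup>2)
            - ereal (\<sigma>2 / 2 * \<eta>2 * (norm (w - z))\<^sup>2)"
proof -
  have A: "g u \<le> g x + ereal (gx x z \<bullet> (x - u) + \<eta>1/2 * (norm (x - x))\<^sup>2 - \<eta>1/2 * (norm (u - x))\<^sup>2)"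
    by (rule prox_ineq[OF u e1 nmg])
  have B: "h w \<le> h z + ereal (gz u z \<bullet> (z - w) + \<eta>2/2 * (norm (z - z))\<^sup>2 - \<eta>2/2 * (norm (w - z))\<^sup>2)"
    by (rule prox_ineq[OF w e2 nmh])
  have C: "f u z \<le> f x z + gx x z \<bullet> (u - x) + M/2 * (norm (u - x))\<^sup>2"
    using descent[OF f_grad f_lip, of x "u - x" z 0] by simp
  have D: "f u w \<le> f u z + gz u z \<bullet> (w - z) + M/2 * (norm (w - z))\<^sup>2"
    using descent[OF f_grad f_lip, of u 0 z "w - z"] by simp
  show ?thesis
  proof (cases "g x = \<infinity> \<or> h z = \<infinity>")
    case True
    then have "Fobj f g h (x, z) = \<infinity>" using nmg nmh by (auto simp: Fobj_def)
    then show ?thesis by simp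
  next
    case False
    then obtain a b where ab: "g x = ereal a" "h z = ereal b" using nmg nmh
      by (metis ereal_cases)
    obtain a' where a': "g u = ereal a'" using A ab nmg[of u] by (cases "g u") auto
    obtain b' where b': "h w = ereal b'" using B ab nmh[of w] by (cases "h w") auto
    have A': "a' \<le> a + (gx x z \<bullet> (x - u) - \<eta>1/2 * (norm (u - x))\<^sup>2)" using A ab a' by simp
    have B': "b' \<le> b + (gz u z \<bullet> (z - w) - \<eta>2/2 * (norm (w - z))\<^sup>2)" using B ab b' by simp
    have i1: "gx x z \<bullet> (x - u) = - (gx x z \<bullet> (u - x))" by (simp add: inner_diff_right)
    have i2: "gz u z \<bullet> (z - w) = - (gz u z \<bullet> (w - z))" by (simp add: inner_diff_right)
    have q1: "M/2 * (norm (u - x))\<^sup>2 \<le> (1 - \<sigma>1) * \<eta>1 / 2 * (norm (u - x))\<^sup>2"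
      using m1 by (intro mult_right_mono) auto
    have q2: "M/2 * (norm (w - z))\<^sup>2 \<le> (1 - \<sigma>2) * \<eta>2 / 2 * (norm (w - z))\<^sup>2"
      using m2 by (intro mult_right_mono) auto
    have "f u w + a' + b' \<le> f x z + a + b - \<sigma>1 / 2 * \<eta>1 * (norm (u - x))\<^sup>2 - \<sigma>2 / 2 * \<eta>2 * (norm (w - z))\<^sup>2"
      using A' B' C D q1 q2 i1 i2 by (simp add: algebra_simps)
    then show ?thesis using ab a' b' by (simp add: Fobj_def)
  qed
qed

lemma qlow:
  assumes "\<tau> > 0" "B \<noteq> -\<infinity>" "ereal a \<le> B + ereal c"
  shows "ereal (- c / \<tau>) \<le> (B - ereal a) / ereal \<tau>"
proof (cases B)
  case (real b)
  then have "-c \<le> b - a" using assms by simp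
  then have "- c / \<tau> \<le> (b - a) / \<tau>" using assms divide_right_mono[of "-c" "b-a" \<tau>] by simp
  then show ?thesis using real assms by simp
next
  case PInf then show ?thesis using assms by simp
next
  case MInf then show ?thesis using assms by simp
qed

lemma f_dir:
  fixes f :: "'a::euclidean_space \<Rightarrow> 'b::euclidean_space \<Rightarrow> real"
  assumes f_grad: "\<And>x z. ((\<lambda>(u, v). f u v) has_derivative
                        (\<lambda>(du, dv). gx x z \<bullet> du + gz x z \<bullet> dv)) (at (x, z))"
  shows "((\<lambda>\<tau>. (f (x + \<tau> *\<^sub>R dx) (z + \<tau> *\<^sub>R dz) - f x z) / \<tau>) \<longlongrightarrow> gx x z \<bullet> dx + gz x z \<bullet> dz) (at_right 0)"
proof -
  have "((\<lambda>s. f (x + s *\<^sub>R dx) (z + s *\<^sub>R dz)) has_real_derivative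
           (gx (x + 0 *\<^sub>R dx) (z + 0 *\<^sub>R dz) \<bullet> dx + gz (x + 0 *\<^sub>R dx) (z + 0 *\<^sub>R dz) \<bullet> dz)) (at 0 within {0<..})"
    by (rule has_field_derivative_at_within[OF line_deriv[OF f_grad]])
  then show ?thesis unfolding has_field_derivative_iff by simp
qed

lemma Fquot:
  assumes "\<tau> > 0" "g xs = ereal a" "h zs = ereal b" "g u \<noteq> -\<infinity>" "h w \<noteq> -\<infinity>"
  shows "(Fobj f g h (u, w) - Fobj f g h (xs, zs)) / ereal \<tau>
     = ereal ((f u w - f xs zs) / \<tau>) + (g u - g xs) / ereal \<tau> + (h w - h zs) / ereal \<tau>"
  using assms
  by (cases "g u"; cases "h w") (auto simp: Fobj_def diff_divide_distrib add_divide_distrib)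

lemma stationary_from_ineq:
  fixes f :: "'a::euclidean_space \<Rightarrow> 'b::euclidean_space \<Rightarrow> real"
  assumes f_grad: "\<And>x z. ((\<lambda>(u, v). f u v) has_derivative
                        (\<lambda>(du, dv). gx x z \<bullet> du + gz x z \<bullet> dv)) (at (x, z))"
    and nmg: "\<And>y. g y \<noteq> -\<infinity>" and nmh: "\<And>y. h y \<noteq> -\<infinity>"
    and ga: "g xs = ereal a" and hb: "h zs = ereal b"
    and gd: "dir_differentiable g xs" and hd: "dir_differentiable h zs"
    and Ig: "\<And>v. g xs \<le> g v + ereal (gx xs zs \<bullet> (v - xs) + E/2 * (norm (v - xs))\<^sup>2)"
    and Ih: "\<And>w. h zs \<le> h w + ereal (gz xs zs \<bullet> (w - zs) + E/2 * (norm (w - zs))\<^sup>2)"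
  shows "d_stationary (Fobj f g h) (xs, zs)"
proof -
  have main: "\<exists>L0. L0 \<noteq> -\<infinity> \<and> has_dir_deriv (Fobj f g h) (xs, zs) d L0 \<and> L0 \<ge> 0" for d :: "'a \<times> 'b"
  proof -
    obtain dx dz where d: "d = (dx, dz)" by (cases d)
    obtain Lg where Lg: "Lg \<noteq> -\<infinity>" "has_dir_deriv g xs dx Lg" using gd unfolding dir_differentiable_def by blast
    obtain Lh where Lh: "Lh \<noteq> -\<infinity>" "has_dir_deriv h zs dz Lh" using hd unfolding dir_differentiable_def by blast
    have Lg_ge: "ereal (- (gx xs zs \<bullet> dx)) \<le> Lg"
    proof (rule tendsto_le[OF trivial_limit_at_right_real])
      show "((\<lambda>\<tau>. (g (xs + \<tau> *\<^sub>R dx) - g xs) / ereal \<tau>) \<longlongrightarrow> Lg) (at_right 0)"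
        using Lg(2) unfolding has_dir_deriv_def .
      show "((\<lambda>\<tau>. ereal (- (gx xs zs \<bullet> dx) - E/2 * \<tau> * (norm dx)\<^sup>2)) \<longlongrightarrow> ereal (- (gx xs zs \<bullet> dx))) (at_right 0)"
        by (intro tendsto_intros) (auto intro!: tendsto_eq_intros)
      show "\<forall>\<^sub>F \<tau> in at_right 0. ereal (- (gx xs zs \<bullet> dx) - E/2 * \<tau> * (norm dx)\<^sup>2) \<le> (g (xs + \<tau> *\<^sub>R dx) - g xs) / ereal \<tau>"
      proof (rule eventually_mono[OF eventually_at_right_less])
        fix \<tau> :: real assume "0 < \<tau>"
        have "ereal (- (\<tau> * (gx xs zs \<bullet> dx) + E/2 * \<tau>\<^sup>2 * (norm dx)\<^sup>2) / \<tau>) \<le> (g (xs + \<tau> *\<^sub>R dx) - ereal a) / ereal \<tau>"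
          using Ig[of "xs + \<tau> *\<^sub>R dx"] \<open>0 < \<tau>\<close> nmg ga
          by (intro qlow) (auto simp: power_mult_distrib mult.assoc)
        moreover have "- (\<tau> * (gx xs zs \<bullet> dx) + E/2 * \<tau>\<^sup>2 * (norm dx)\<^sup>2) / \<tau> = - (gx xs zs \<bullet> dx) - E/2 * \<tau> * (norm dx)\<^sup>2"
          using \<open>0 < \<tau>\<close> by (simp add: field_simps power2_eq_square)
        ultimately show "ereal (- (gx xs zs \<bullet> dx) - E/2 * \<tau> * (norm dx)\<^sup>2) \<le> (g (xs + \<tau> *\<^sub>R dx) - g xs) / ereal \<tau>"
          using ga by simp
      qed
    qed
    have Lh_ge: "ereal (- (gz xs zs \<bullet> dz)) \<le> Lh"
    proof (rule tendsto_le[OF trivial_limit_at_right_real])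
      show "((\<lambda>\<tau>. (h (zs + \<tau> *\<^sub>R dz) - h zs) / ereal \<tau>) \<longlongrightarrow> Lh) (at_right 0)"
        using Lh(2) unfolding has_dir_deriv_def .
      show "((\<lambda>\<tau>. ereal (- (gz xs zs \<bullet> dz) - E/2 * \<tau> * (norm dz)\<^sup>2)) \<longlongrightarrow> ereal (- (gz xs zs \<bullet> dz))) (at_right 0)"
        by (intro tendsto_intros) (auto intro!: tendsto_eq_intros)
      show "\<forall>\<^sub>F \<tau> in at_right 0. ereal (- (gz xs zs \<bullet> dz) - E/2 * \<tau> * (norm dz)\<^sup>2) \<le> (h (zs + \<tau> *\<^sub>R dz) - h zs) / ereal \<tau>"
      proof (rule eventually_mono[OF eventually_at_right_less])
        fix \<tau> :: real assume "0 < \<tau>"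
        have "ereal (- (\<tau> * (gz xs zs \<bullet> dz) + E/2 * \<tau>\<^sup>2 * (norm dz)\<^sup>2) / \<tau>) \<le> (h (zs + \<tau> *\<^sub>R dz) - ereal b) / ereal \<tau>"
          using Ih[of "zs + \<tau> *\<^sub>R dz"] \<open>0 < \<tau>\<close> nmh hb
          by (intro qlow) (auto simp: power_mult_distrib mult.assoc)
        moreover have "- (\<tau> * (gz xs zs \<bullet> dz) + E/2 * \<tau>\<^sup>2 * (norm dz)\<^sup>2) / \<tau> = - (gz xs zs \<bullet> dz) - E/2 * \<tau> * (norm dz)\<^sup>2"
          using \<open>0 < \<tau>\<close> by (simp add: field_simps power2_eq_square)
        ultimately show "ereal (- (gz xs zs \<bullet> dz) - E/2 * \<tau> * (norm dz)\<^sup>2) \<le> (h (zs + \<tau> *\<^sub>R dz) - h zs) / ereal \<tau>"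
          using hb by simp
      qed
    qed
    define L0 where "L0 = ereal (gx xs zs \<bullet> dx + gz xs zs \<bullet> dz) + Lg + Lh"
    have lim: "((\<lambda>\<tau>. ereal ((f (xs + \<tau> *\<^sub>R dx) (zs + \<tau> *\<^sub>R dz) - f xs zs) / \<tau>)
                 + (g (xs + \<tau> *\<^sub>R dx) - g xs) / ereal \<tau> + (h (zs + \<tau> *\<^sub>R dz) - h zs) / ereal \<tau>) \<longlongrightarrow> L0) (at_right 0)"
    proof -
      have t1: "((\<lambda>\<tau>. ereal ((f (xs + \<tau> *\<^sub>R dx) (zs + \<tau> *\<^sub>R dz) - f xs zs) / \<tau>)) \<longlongrightarrow> ereal (gx xs zs \<bullet> dx + gz xs zs \<bullet> dz)) (at_right 0)"
        using f_dir[OF f_grad, of xs dx zs dz] by (rule tendsto_ereal)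
      have t2: "((\<lambda>\<tau>. (g (xs + \<tau> *\<^sub>R dx) - g xs) / ereal \<tau>) \<longlongrightarrow> Lg) (at_right 0)"
        using Lg(2) unfolding has_dir_deriv_def .
      have t3: "((\<lambda>\<tau>. (h (zs + \<tau> *\<^sub>R dz) - h zs) / ereal \<tau>) \<longlongrightarrow> Lh) (at_right 0)"
        using Lh(2) unfolding has_dir_deriv_def .
      have t12: "((\<lambda>\<tau>. ereal ((f (xs + \<tau> *\<^sub>R dx) (zs + \<tau> *\<^sub>R dz) - f xs zs) / \<tau>) + (g (xs + \<tau> *\<^sub>R dx) - g xs) / ereal \<tau>)
          \<longlongrightarrow> ereal (gx xs zs \<bullet> dx + gz xs zs \<bullet> dz) + Lg) (at_right 0)"
        by (rule tendsto_add_ereal_general[OF _ t1 t2]) simp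
      show ?thesis unfolding L0_def
        by (rule tendsto_add_ereal_general[OF _ t12 t3]) (use Lg(1) Lh(1) in \<open>cases Lg; cases Lh; auto\<close>)
    qed
    have hd0: "has_dir_deriv (Fobj f g h) (xs, zs) d L0"
      unfolding has_dir_deriv_def d
    proof (rule Lim_transform_eventually[OF lim])
      show "\<forall>\<^sub>F \<tau> in at_right 0. ereal ((f (xs + \<tau> *\<^sub>R dx) (zs + \<tau> *\<^sub>R dz) - f xs zs) / \<tau>)
                 + (g (xs + \<tau> *\<^sub>R dx) - g xs) / ereal \<tau> + (h (zs + \<tau> *\<^sub>R dz) - h zs) / ereal \<tau>
           = (Fobj f g h ((xs, zs) + \<tau> *\<^sub>R (dx, dz)) - Fobj f g h (xs, zs)) / ereal \<tau>"
        by (rule eventually_mono[OF eventually_at_right_less]) (use Fquot[where f=f and g=g and h=h and xs=xs and zs=zs and a=a and b=b] ga hb nmg nmh in simp)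
    qed
    have "L0 \<ge> ereal (gx xs zs \<bullet> dx + gz xs zs \<bullet> dz) + ereal (- (gx xs zs \<bullet> dx)) + ereal (- (gz xs zs \<bullet> dz))"
      unfolding L0_def by (intro add_mono Lg_ge Lh_ge order_refl)
    then have "L0 \<ge> 0" by (simp add: zero_ereal_def)
    moreover have "L0 \<noteq> -\<infinity>" using \<open>L0 \<ge> 0\<close> by auto
    ultimately show ?thesis using hd0 by blast
  qed
  have fin: "\<bar>Fobj f g h (xs, zs)\<bar> \<noteq> \<infinity>" using ga hb by (simp add: Fobj_def)
  show ?thesis
    unfolding d_stationary_def dir_differentiable_def
  proof (intro conjI allI impI fin)
    fix d show "\<exists>L. L \<noteq> - \<infinity> \<and> has_dir_deriv (Fobj f g h) (xs, zs) d L" using main by blast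
  next
    fix d L assume "has_dir_deriv (Fobj f g h) (xs, zs) d L"
    moreover obtain L0 where "L0 \<ge> 0" "has_dir_deriv (Fobj f g h) (xs, zs) d L0" using main by blast
    ultimately have "L = L0" unfolding has_dir_deriv_def
      using tendsto_unique[OF trivial_limit_at_right_real] by blast
    then show "L \<ge> 0" using \<open>L0 \<ge> 0\<close> by simp
  qed
qed

lemma unif_seq:
  fixes G :: "'c::metric_space \<Rightarrow> real"
  assumes unif: "uniformly_continuous_on S G"
    and ev: "eventually (\<lambda>n. P n \<in> S \<and> Q n \<in> S) sequentially"
    and d: "(\<lambda>n. dist (P n) (Q n)) \<longlonglongrightarrow> 0"
    and q: "(\<lambda>n. G (Q n)) \<longlonglongrightarrow> L"
  shows "(\<lambda>n. G (P n)) \<longlonglongrightarrow> L"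
  unfolding tendsto_iff
proof (intro allI impI)
  fix e :: real assume e: "e > 0"
  obtain dd where dd: "dd > 0" "\<And>x x'. x \<in> S \<Longrightarrow> x' \<in> S \<Longrightarrow> dist x' x < dd \<Longrightarrow> dist (G x') (G x) < e/2"
    using unif e unfolding uniformly_continuous_on_def by (meson half_gt_zero)
  have e1: "eventually (\<lambda>n. dist (P n) (Q n) < dd) sequentially"
  proof -
    have "eventually (\<lambda>n. dist (dist (P n) (Q n)) 0 < dd) sequentially" using d dd(1) unfolding tendsto_iff by blast
    then show ?thesis by simp
  qed
  have e2: "eventually (\<lambda>n. dist (G (Q n)) L < e/2) sequentially"
    using q e unfolding tendsto_iff by (meson half_gt_zero)
  show "eventually (\<lambda>n. dist (G (P n)) L < e) sequentially"
    using ev e1 e2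
  proof eventually_elim
    case (elim n)
    then have "dist (G (P n)) (G (Q n)) < e/2" using dd(2)[of "Q n" "P n"] by simp
    then show ?case using elim dist_triangle[of "G (P n)" L "G (Q n)"] by linarith
  qed
qed

lemma lsc_lim:
  fixes \<phi> :: "'v::topological_space \<Rightarrow> ereal"
  assumes lsc: "lsc_fun \<phi>" and X: "X \<longlonglongrightarrow> a"
    and ev: "eventually (\<lambda>n. \<phi> (X n) \<le> ereal (Y n)) sequentially" and Y: "Y \<longlonglongrightarrow> y"
  shows "\<phi> a \<le> ereal y"
proof (rule ereal_le_epsilon2)
  fix e :: real assume e: "e > 0"
  have "eventually (\<lambda>n. Y n < y + e) sequentially"
    using Y e by (intro order_tendstoD) auto
  with ev have "eventually (\<lambda>n. X n \<in> {x. \<phi> x \<le> ereal (y + e)}) sequentially"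
    by eventually_elim (auto intro: order_trans)
  then have "a \<in> {x. \<phi> x \<le> ereal (y + e)}"
    using lsc X unfolding lsc_fun_def by (intro Lim_in_closed_set) auto
  then show "\<phi> a \<le> ereal y + ereal e" by simp
qed

lemma gll:
  fixes Fr Wr D :: "nat \<Rightarrow> real" and ell :: "nat \<Rightarrow> nat" and p :: "nat \<Rightarrow> 'c::metric_space"
    and G :: "'c \<Rightarrow> real"
  assumes r: "r \<ge> 1"
    and acc: "\<And>t. t \<ge> r \<Longrightarrow> Fr (Suc t) \<le> Wr t - cc * D t" and cc: "cc > 0" and Dnn: "\<And>t. D t \<ge> 0"
    and Wlim: "Wr \<longlonglongrightarrow> Wst"
    and hell: "\<And>t. t \<ge> r \<Longrightarrow> Suc t - r \<le> ell t \<and> ell t \<le> t \<and> Fr (ell t) = Wr t"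
    and unif: "uniformly_continuous_on S G"
    and pS: "\<And>t. t \<ge> 1 \<Longrightarrow> p t \<in> S" and GF: "\<And>t. t \<ge> 1 \<Longrightarrow> G (p t) = Fr t"
    and Dd: "\<And>t. dist (p t) (p (Suc t)) \<le> sqrt (D t)"
  shows "D \<longlonglongrightarrow> 0"
proof -
  have evl: "eventually (\<lambda>t. k \<le> ell t - j) sequentially" for k j
  proof -
    have "eventually (\<lambda>t. t \<ge> k + j + r) sequentially" by (rule eventually_ge_at_top)
    then show ?thesis
    proof eventually_elim
      case (elim t)
      then have "t \<ge> r" by simp
      from hell[OF this] elim show ?case by linarith
    qed
  qed
  have fl: "filterlim (\<lambda>t. ell t - j) sequentially sequentially" for j
    unfolding filterlim_at_top using evl by blast
  have Rfrom: "(\<lambda>t. D (ell t - Suc j)) \<longlonglongrightarrow> 0" if Qj: "(\<lambda>t. Fr (ell t - j)) \<longlonglongrightarrow> Wst" for j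
  proof -
    have W': "(\<lambda>t. Wr (ell t - Suc j)) \<longlonglongrightarrow> Wst" by (rule filterlim_compose[OF Wlim fl[of "Suc j"]])
    have up: "(\<lambda>t. (Wr (ell t - Suc j) - Fr (ell t - j)) / cc) \<longlonglongrightarrow> (Wst - Wst) / cc"
      using cc tendsto_diff[OF W' Qj] by (auto intro!: tendsto_divide)
    show ?thesis
    proof (rule tendsto_sandwich[OF _ _ tendsto_const up[simplified]])
      show "eventually (\<lambda>t. 0 \<le> D (ell t - Suc j)) sequentially" using Dnn by simp
      show "eventually (\<lambda>t. D (ell t - Suc j) \<le> (Wr (ell t - Suc j) - Fr (ell t - j)) / cc) sequentially"
        using evl[of "Suc r" j]
      proof eventually_elim
        case (elim t)
        define m where "m = ell t - Suc j"
        have m1: "m \<ge> r" "Suc m = ell t - j" using elim unfolding m_def by auto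
        have "Fr (Suc m) \<le> Wr m - cc * D m" by (rule acc[OF m1(1)])
        then have "D m \<le> (Wr m - Fr (Suc m)) / cc" using cc by (simp add: pos_le_divide_eq algebra_simps)
        then show ?case using m1 unfolding m_def by simp
      qed
    qed
  qed
  have Qstep: "(\<lambda>t. Fr (ell t - Suc j)) \<longlonglongrightarrow> Wst"
    if Qj: "(\<lambda>t. Fr (ell t - j)) \<longlonglongrightarrow> Wst" and Rj: "(\<lambda>t. D (ell t - Suc j)) \<longlonglongrightarrow> 0" for j
  proof -
    have ev1: "eventually (\<lambda>t. 1 \<le> ell t - Suc j) sequentially" by (rule evl)
    have sq: "(\<lambda>t. sqrt (D (ell t - Suc j))) \<longlonglongrightarrow> 0"
      using tendsto_real_sqrt[OF Rj] by simp
    have dlim: "(\<lambda>t. dist (p (ell t - Suc j)) (p (ell t - j))) \<longlonglongrightarrow> 0"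
    proof (rule tendsto_sandwich[OF _ _ tendsto_const sq])
      show "eventually (\<lambda>t. 0 \<le> dist (p (ell t - Suc j)) (p (ell t - j))) sequentially" by simp
      show "eventually (\<lambda>t. dist (p (ell t - Suc j)) (p (ell t - j)) \<le> sqrt (D (ell t - Suc j))) sequentially"
        using ev1
      proof eventually_elim
        case (elim t)
        then have "Suc (ell t - Suc j) = ell t - j" by auto
        then show ?case using Dd[of "ell t - Suc j"] by simp
      qed
    qed
    have qG: "(\<lambda>t. G (p (ell t - j))) \<longlonglongrightarrow> Wst"
    proof (rule Lim_transform_eventually[OF Qj])
      show "eventually (\<lambda>t. Fr (ell t - j) = G (p (ell t - j))) sequentially"
        using ev1 by eventually_elim (subst GF, auto)
    qed
    have "(\<lambda>t. G (p (ell t - Suc j))) \<longlonglongrightarrow> Wst"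
    proof (rule unif_seq[OF unif _ dlim qG])
      show "eventually (\<lambda>t. p (ell t - Suc j) \<in> S \<and> p (ell t - j) \<in> S) sequentially"
        using ev1 by eventually_elim (auto intro!: pS)
    qed
    then show ?thesis
    proof (rule Lim_transform_eventually)
      show "eventually (\<lambda>t. G (p (ell t - Suc j)) = Fr (ell t - Suc j)) sequentially"
        using ev1 by eventually_elim (rule GF)
    qed
  qed
  have Q: "(\<lambda>t. Fr (ell t - j)) \<longlonglongrightarrow> Wst" for j
  proof (induction j)
    case 0
    show ?case
    proof (rule Lim_transform_eventually[OF Wlim])
      show "eventually (\<lambda>t. Wr t = Fr (ell t - 0)) sequentially"
        using eventually_ge_at_top[of r] by eventually_elim (use hell in auto)
    qed
  next
    case (Suc j)
    then show ?case using Qstep Rfrom by blast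
  qed
  have R: "(\<lambda>t. D (ell t - Suc j)) \<longlonglongrightarrow> 0" for j using Rfrom Q by blast
  show ?thesis
    unfolding tendsto_iff
  proof (intro allI impI)
    fix e :: real assume e: "e > 0"
    have "eventually (\<lambda>t. \<forall>j\<in>{..<r}. dist (D (ell t - Suc j)) 0 < e) sequentially"
      using R e unfolding tendsto_iff by (intro eventually_ball_finite) auto
    then obtain T where T: "\<And>t j. t \<ge> T \<Longrightarrow> j < r \<Longrightarrow> dist (D (ell t - Suc j)) 0 < e"
      unfolding eventually_sequentially by blast
    show "eventually (\<lambda>t. dist (D t) 0 < e) sequentially"
      unfolding eventually_sequentially
    proof (intro exI allI impI)
      fix t assume "t \<ge> T"
      have "t + r \<ge> r" by simp
      from hell[OF this] have h1: "Suc (t + r) - r \<le> ell (t + r)" "ell (t + r) \<le> t + r" by auto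
      define j where "j = ell (t + r) - Suc t"
      have "j < r" "ell (t + r) - Suc j = t" using h1 r unfolding j_def by auto
      with T[of "t + r" j] \<open>t \<ge> T\<close> show "dist (D t) 0 < e" by simp
    qed
  qed
qed

lemma lip_tendsto:
  fixes gx :: "'a::real_normed_vector \<Rightarrow> 'b::real_normed_vector \<Rightarrow> 'a" and gz :: "'a \<Rightarrow> 'b \<Rightarrow> 'b"
  assumes f_lip: "\<And>x1 z1 x2 z2. norm (gx x1 z1 - gx x2 z2, gz x1 z1 - gz x2 z2)
                               \<le> M * norm (x1 - x2, z1 - z2)"
    and A: "A \<longlonglongrightarrow> a" and B: "B \<longlonglongrightarrow> b"
  shows "(\<lambda>n. gx (A n) (B n)) \<longlonglongrightarrow> gx a b \<and> (\<lambda>n. gz (A n) (B n)) \<longlonglongrightarrow> gz a b"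
proof -
  have "(\<lambda>n. (A n - a, B n - b)) \<longlonglongrightarrow> (a - a, b - b)"
    by (intro tendsto_intros A B)
  then have "(\<lambda>n. (A n - a, B n - b)) \<longlonglongrightarrow> 0" by (simp add: zero_prod_def)
  then have "(\<lambda>n. norm (A n - a, B n - b)) \<longlonglongrightarrow> 0"
    by (rule tendsto_norm_zero)
  then have m: "(\<lambda>n. M * norm (A n - a, B n - b)) \<longlonglongrightarrow> 0"
    using tendsto_mult_right_zero by blast
  have "(\<lambda>n. gx (A n) (B n)) \<longlonglongrightarrow> gx a b"
    by (rule LIM_zero_cancel, rule Lim_null_comparison[OF _ m]) (intro always_eventually allI order_trans[OF norm_fst_le f_lip])
  moreover have "(\<lambda>n. gz (A n) (B n)) \<longlonglongrightarrow> gz a b"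
    by (rule LIM_zero_cancel, rule Lim_null_comparison[OF _ m]) (intro always_eventually allI order_trans[OF norm_snd_le f_lip])
  ultimately show ?thesis by (rule conjI)
qed

lemma ereal_sub2: "c \<le> a + b \<Longrightarrow> W - ereal a - ereal b \<le> W - ereal c"
  by (cases W) auto

lemma ereal_sub_nonneg: "0 \<le> c \<Longrightarrow> W - ereal c \<le> W"
  by (cases W) auto


theorem theorem3:
  fixes f :: "'a::euclidean_space \<Rightarrow> 'b::euclidean_space \<Rightarrow> real"
    and gx :: "'a \<Rightarrow> 'b \<Rightarrow> 'a" and gz :: "'a \<Rightarrow> 'b \<Rightarrow> 'b"
    and g :: "'a \<Rightarrow> ereal" and h :: "'b \<Rightarrow> ereal"
    and M :: real
    and r :: nat and \<rho>1 \<rho>2 \<sigma>1 \<sigma>2 \<eta>lo \<eta>hi :: real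
    and x :: "nat \<Rightarrow> 'a" and z :: "nat \<Rightarrow> 'b"
    and \<eta>x \<eta>z \<eta>hx \<eta>hz :: "nat \<Rightarrow> real"
    and lt :: "nat \<Rightarrow> nat"
    and xt :: "nat \<Rightarrow> nat \<Rightarrow> 'a" and zt :: "nat \<Rightarrow> nat \<Rightarrow> 'b"
    and K :: "('a \<times> 'b) set"
    and xs :: 'a and zs :: 'b
  \<comment> \<open>(i) f differentiable, gradient (gx, gz) jointly M-Lipschitz\<close>
  assumes f_grad: "\<And>x z. ((\<lambda>(u, v). f u v) has_derivative
                        (\<lambda>(du, dv). gx x z \<bullet> du + gz x z \<bullet> dv)) (at (x, z))"
    and M_pos: "M > 0"
    and f_lip: "\<And>x1 z1 x2 z2. norm (gx x1 z1 - gx x2 z2, gz x1 z1 - gz x2 z2)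
                               \<le> M * norm (x1 - x2, z1 - z2)"
    and g_proper: "proper_fun g" and h_proper: "proper_fun h"
    and g_lsc: "lsc_fun g" and h_lsc: "lsc_fun h"
    and g_dd: "\<And>u. g u \<noteq> \<infinity> \<Longrightarrow> dir_differentiable g u"
    and h_dd: "\<And>v. h v \<noteq> \<infinity> \<Longrightarrow> dir_differentiable h v"
  \<comment> \<open>(ii) F bounded below\<close>
    and F_bdd: "\<exists>c::real. \<forall>p. Fobj f g h p \<ge> ereal c"
  \<comment> \<open>(iii) prox-boundedness\<close>
    and prox_bdd: "\<exists>\<eta>>0. (\<exists>c::real. \<forall>u. g u + ereal (\<eta> / 2 * (norm u)\<^sup>2) \<ge> ereal c)
                        \<and> (\<exists>c::real. \<forall>v. h v + ereal (\<eta> / 2 * (norm v)\<^sup>2) \<ge> ereal c)"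
  \<comment> \<open>algorithm parameters\<close>
    and r_ge: "r \<ge> 1"
    and \<rho>1_gt: "\<rho>1 > 1" and \<rho>2_gt: "\<rho>2 > 1"
    and \<sigma>1_in: "0 < \<sigma>1" "\<sigma>1 < 1" and \<sigma>2_in: "0 < \<sigma>2" "\<sigma>2 < 1"
    and \<eta>lo_pos: "0 < \<eta>lo" and \<eta>lo_hi: "\<eta>lo \<le> \<eta>hi"
    and init: "\<eta>hx 0 = 1" "\<eta>hz 0 = 1"
  \<comment> \<open>GPALM iteration t: trial points for l = 0, ..., lt t (backtracking)\<close>
    and step_x: "\<And>t. \<eta>x t = \<rho>1 ^ lt t * \<eta>hx t"
    and step_z: "\<And>t. \<eta>z t = \<rho>2 ^ lt t * \<eta>hz t"
    and trial_x: "\<And>t l. l \<le> lt t \<Longrightarrow>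
        xt t l \<in> prox g (\<rho>1 ^ l * \<eta>hx t)
                   (x t - (1 / (\<rho>1 ^ l * \<eta>hx t)) *\<^sub>R gx (x t) (z t))"
    and trial_z: "\<And>t l. l \<le> lt t \<Longrightarrow>
        zt t l \<in> prox h (\<rho>2 ^ l * \<eta>hz t)
                   (z t - (1 / (\<rho>2 ^ l * \<eta>hz t)) *\<^sub>R gz (xt t l) (z t))"
    and reject: "\<And>t l. l < lt t \<Longrightarrow>
        \<not> (Fobj f g h (xt t l, zt t l)
             \<le> Max ((\<lambda>j. Fobj f g h (x j, z j)) ` {Suc t - r..t})
               - ereal (\<sigma>1 / 2 * (\<rho>1 ^ l * \<eta>hx t) * (norm (xt t l - x t))\<^sup>2)
               - ereal (\<sigma>2 / 2 * (\<rho>2 ^ l * \<eta>hz t) * (norm (zt t l - z t))\<^sup>2))"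
    and accept: "\<And>t. Fobj f g h (x (Suc t), z (Suc t))
             \<le> Max ((\<lambda>j. Fobj f g h (x j, z j)) ` {Suc t - r..t})
               - ereal (\<sigma>1 / 2 * \<eta>x t * (norm (x (Suc t) - x t))\<^sup>2)
               - ereal (\<sigma>2 / 2 * \<eta>z t * (norm (z (Suc t) - z t))\<^sup>2)"
    and next_x: "\<And>t. x (Suc t) = xt t (lt t)"
    and next_z: "\<And>t. z (Suc t) = zt t (lt t)"
  \<comment> \<open>step-size initialisation for the next iteration\<close>
    and upd_x: "\<And>t. x (Suc t) \<noteq> x t \<Longrightarrow> \<eta>hx (Suc t) = clip \<eta>lo \<eta>hi
        (((x (Suc t) - x t) \<bullet> (gx (x (Suc t)) (z (Suc t)) - gx (x t) (z t)))
           / (norm (x (Suc t) - x t))\<^sup>2)"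
    and upd_x0: "\<And>t. x (Suc t) = x t \<Longrightarrow> \<eta>hx (Suc t) \<in> {\<eta>lo..\<eta>hi}"
    and upd_z: "\<And>t. z (Suc t) \<noteq> z t \<Longrightarrow> \<eta>hz (Suc t) = clip \<eta>lo \<eta>hi
        (((z (Suc t) - z t) \<bullet> (gz (x (Suc t)) (z (Suc t)) - gz (x (Suc t)) (z t)))
           / (norm (z (Suc t) - z t))\<^sup>2)"
    and upd_z0: "\<And>t. z (Suc t) = z t \<Longrightarrow> \<eta>hz (Suc t) \<in> {\<eta>lo..\<eta>hi}"
  \<comment> \<open>boundedness and continuity on a compact set containing the sequence\<close>
    and bounded_seq: "bounded (range (\<lambda>t. (x t, z t)))"
    and K_compact: "compact K" and K_contains: "range (\<lambda>t. (x t, z t)) \<subseteq> K"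
    and F_cont: "continuous_on K (Fobj f g h)"
  \<comment> \<open>(xs, zs) is an accumulation point of the sequence\<close>
    and acc: "\<exists>s::nat \<Rightarrow> nat. strict_mono s \<and> ((\<lambda>t. (x (s t), z (s t))) \<longlonglongrightarrow> (xs, zs))"
  shows "d_stationary (Fobj f g h) (xs, zs)"
proof -
  have nmg: "\<And>y. g y \<noteq> -\<infinity>" using g_proper unfolding proper_fun_def by blast
  have nmh: "\<And>y. h y \<noteq> -\<infinity>" using h_proper unfolding proper_fun_def by blast
  obtain v0 where v0: "g v0 \<noteq> \<infinity>" using g_proper unfolding proper_fun_def by blast
  obtain w0 where w0: "h w0 \<noteq> \<infinity>" using h_proper unfolding proper_fun_def by blast
  obtain c0 :: real where c0: "\<And>p. Fobj f g h p \<ge> ereal c0" using F_bdd by blast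
  define elo where "elo = min 1 \<eta>lo"
  define ehi where "ehi = max 1 \<eta>hi"
  have elo_pos: "elo > 0" using \<eta>lo_pos by (simp add: elo_def)
  have elo_ehi: "elo \<le> ehi" by (simp add: elo_def ehi_def)
  have clip_in: "\<And>q. clip \<eta>lo \<eta>hi q \<in> {\<eta>lo..\<eta>hi}" using \<eta>lo_hi by (auto simp: clip_def)
  have hx_b: "elo \<le> \<eta>hx t \<and> \<eta>hx t \<le> ehi" for t
  proof (cases t)
    case 0 then show ?thesis using init by (simp add: elo_def ehi_def)
  next
    case (Suc t')
    have "\<eta>hx (Suc t') \<in> {\<eta>lo..\<eta>hi}"
      using upd_x[of t'] upd_x0[of t'] clip_in by (cases "x (Suc t') = x t'") auto
    then show ?thesis using Suc by (auto simp: elo_def ehi_def)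
  qed
  have hz_b: "elo \<le> \<eta>hz t \<and> \<eta>hz t \<le> ehi" for t
  proof (cases t)
    case 0 then show ?thesis using init by (simp add: elo_def ehi_def)
  next
    case (Suc t')
    have "\<eta>hz (Suc t') \<in> {\<eta>lo..\<eta>hi}"
      using upd_z[of t'] upd_z0[of t'] clip_in by (cases "z (Suc t') = z t'") auto
    then show ?thesis using Suc by (auto simp: elo_def ehi_def)
  qed
  obtain n1 where n1: "M / ((1 - \<sigma>1) * elo) < \<rho>1 ^ n1" using real_arch_pow[OF \<rho>1_gt] by blast
  obtain n2 where n2: "M / ((1 - \<sigma>2) * elo) < \<rho>2 ^ n2" using real_arch_pow[OF \<rho>2_gt] by blast
  define N where "N = max n1 n2"
  have N1: "M \<le> (1 - \<sigma>1) * (\<rho>1 ^ N * \<eta>hx t)" for t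
  proof -
    have p1: "\<rho>1 ^ n1 \<le> \<rho>1 ^ N" using \<rho>1_gt by (intro power_increasing) (auto simp: N_def)
    have "M < (1 - \<sigma>1) * elo * \<rho>1 ^ n1" using n1 \<sigma>1_in elo_pos by (simp add: divide_less_eq mult.commute)
    also have "\<dots> \<le> (1 - \<sigma>1) * (\<rho>1 ^ N * \<eta>hx t)"
    proof -
      have "elo * \<rho>1 ^ n1 \<le> \<eta>hx t * \<rho>1 ^ N" by (rule mult_mono) (use p1 hx_b[of t] elo_pos \<rho>1_gt in auto)
      then have "(1 - \<sigma>1) * (elo * \<rho>1 ^ n1) \<le> (1 - \<sigma>1) * (\<eta>hx t * \<rho>1 ^ N)" by (rule mult_left_mono) (use \<sigma>1_in in simp)
      then show ?thesis by (simp add: ac_simps)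
    qed
    finally show ?thesis by simp
  qed
  have N2: "M \<le> (1 - \<sigma>2) * (\<rho>2 ^ N * \<eta>hz t)" for t
  proof -
    have p1: "\<rho>2 ^ n2 \<le> \<rho>2 ^ N" using \<rho>2_gt by (intro power_increasing) (auto simp: N_def)
    have "M < (1 - \<sigma>2) * elo * \<rho>2 ^ n2" using n2 \<sigma>2_in elo_pos by (simp add: divide_less_eq mult.commute)
    also have "\<dots> \<le> (1 - \<sigma>2) * (\<rho>2 ^ N * \<eta>hz t)"
    proof -
      have "elo * \<rho>2 ^ n2 \<le> \<eta>hz t * \<rho>2 ^ N" by (rule mult_mono) (use p1 hz_b[of t] elo_pos \<rho>2_gt in auto)
      then have "(1 - \<sigma>2) * (elo * \<rho>2 ^ n2) \<le> (1 - \<sigma>2) * (\<eta>hz t * \<rho>2 ^ N)" by (rule mult_left_mono) (use \<sigma>2_in in simp)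
      then show ?thesis by (simp add: ac_simps)
    qed
    finally show ?thesis by simp
  qed
  have win: "t \<in> {Suc t - r..t}" for t using r_ge by auto
  have Fle: "Fobj f g h (x t, z t) \<le> Max ((\<lambda>j. Fobj f g h (x j, z j)) ` {Suc t - r..t})" for t
    by (rule Max_ge) (use win in auto)
  have hxpos: "\<rho>1 ^ l * \<eta>hx t > 0" for l t using hx_b[of t] elo_pos \<rho>1_gt by simp
  have hzpos: "\<rho>2 ^ l * \<eta>hz t > 0" for l t using hz_b[of t] elo_pos \<rho>2_gt by simp
  have lt_bnd: "lt t \<le> N" for t
  proof (rule ccontr)
    assume "\<not> lt t \<le> N"
    then have NL: "N < lt t" by simp
    have "Fobj f g h (xt t N, zt t N) \<le> Fobj f g h (x t, z t)
        - ereal (\<sigma>1 / 2 * (\<rho>1 ^ N * \<eta>hx t) * (norm (xt t N - x t))\<^sup>2)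
        - ereal (\<sigma>2 / 2 * (\<rho>2 ^ N * \<eta>hz t) * (norm (zt t N - z t))\<^sup>2)"
      by (rule descent_step[OF f_grad f_lip nmg nmh trial_x[of N t] trial_z[of N t] hxpos hzpos N1 N2])
         (use NL in auto)
    also have "\<dots> \<le> Max ((\<lambda>j. Fobj f g h (x j, z j)) ` {Suc t - r..t})
        - ereal (\<sigma>1 / 2 * (\<rho>1 ^ N * \<eta>hx t) * (norm (xt t N - x t))\<^sup>2)
        - ereal (\<sigma>2 / 2 * (\<rho>2 ^ N * \<eta>hz t) * (norm (zt t N - z t))\<^sup>2)"
      by (intro ereal_minus_mono Fle order_refl)
    finally show False using reject[OF NL] by blast
  qed
  define E where "E = max (\<rho>1 ^ N * ehi) (\<rho>2 ^ N * ehi)"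
  have ex_b: "elo \<le> \<eta>x t \<and> \<eta>x t \<le> E" for t
  proof
    have "1 \<le> \<rho>1 ^ lt t" using \<rho>1_gt by simp
    then have "1 * \<eta>hx t \<le> \<rho>1 ^ lt t * \<eta>hx t" using hx_b[of t] elo_pos
      by (intro mult_right_mono) auto
    then show "elo \<le> \<eta>x t" unfolding step_x using hx_b[of t] by simp
    have "\<rho>1 ^ lt t \<le> \<rho>1 ^ N" using \<rho>1_gt lt_bnd[of t] by (intro power_increasing) auto
    then have "\<rho>1 ^ lt t * \<eta>hx t \<le> \<rho>1 ^ N * ehi" using hx_b[of t] elo_pos \<rho>1_gt
      by (intro mult_mono) auto
    then show "\<eta>x t \<le> E" unfolding step_x E_def by linarith
  qed
  have ez_b: "elo \<le> \<eta>z t \<and> \<eta>z t \<le> E" for t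
  proof
    have "1 \<le> \<rho>2 ^ lt t" using \<rho>2_gt by simp
    then have "1 * \<eta>hz t \<le> \<rho>2 ^ lt t * \<eta>hz t" using hz_b[of t] elo_pos
      by (intro mult_right_mono) auto
    then show "elo \<le> \<eta>z t" unfolding step_z using hz_b[of t] by simp
    have "\<rho>2 ^ lt t \<le> \<rho>2 ^ N" using \<rho>2_gt lt_bnd[of t] by (intro power_increasing) auto
    then have "\<rho>2 ^ lt t * \<eta>hz t \<le> \<rho>2 ^ N * ehi" using hz_b[of t] elo_pos \<rho>2_gt
      by (intro mult_mono) auto
    then show "\<eta>z t \<le> E" unfolding step_z E_def by linarith
  qed
  have expos: "\<eta>x t > 0" for t using ex_b[of t] elo_pos by linarith
  have ezpos: "\<eta>z t > 0" for t using ez_b[of t] elo_pos by linarith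
  have px: "x (Suc t) \<in> prox g (\<eta>x t) (x t - (1 / \<eta>x t) *\<^sub>R gx (x t) (z t))" for t
    using trial_x[of "lt t" t] unfolding step_x next_x by simp
  have pz: "z (Suc t) \<in> prox h (\<eta>z t) (z t - (1 / \<eta>z t) *\<^sub>R gz (x (Suc t)) (z t))" for t
    using trial_z[of "lt t" t] unfolding step_z next_z next_x by simp
  have Ig: "g (x (Suc t)) \<le> g v + ereal (gx (x t) (z t) \<bullet> (v - x (Suc t)) + E/2 * (norm (v - x t))\<^sup>2)" for t v
  proof -
    have "g (x (Suc t)) \<le> g v + ereal (gx (x t) (z t) \<bullet> (v - x (Suc t)) + \<eta>x t/2 * (norm (v - x t))\<^sup>2 - \<eta>x t/2 * (norm (x (Suc t) - x t))\<^sup>2)"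
      by (rule prox_ineq[OF px expos nmg])
    also have "\<dots> \<le> g v + ereal (gx (x t) (z t) \<bullet> (v - x (Suc t)) + E/2 * (norm (v - x t))\<^sup>2)"
    proof (rule add_left_mono)
      have "\<eta>x t/2 * (norm (v - x t))\<^sup>2 \<le> E/2 * (norm (v - x t))\<^sup>2"
        using ex_b[of t] by (intro mult_right_mono) auto
      moreover have "0 \<le> \<eta>x t/2 * (norm (x (Suc t) - x t))\<^sup>2" using expos[of t] by simp
      ultimately show "ereal (gx (x t) (z t) \<bullet> (v - x (Suc t)) + \<eta>x t/2 * (norm (v - x t))\<^sup>2 - \<eta>x t/2 * (norm (x (Suc t) - x t))\<^sup>2)
          \<le> ereal (gx (x t) (z t) \<bullet> (v - x (Suc t)) + E/2 * (norm (v - x t))\<^sup>2)" unfolding ereal_less_eq(3) by linarith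
    qed
    finally show ?thesis .
  qed
  have Ih: "h (z (Suc t)) \<le> h w + ereal (gz (x (Suc t)) (z t) \<bullet> (w - z (Suc t)) + E/2 * (norm (w - z t))\<^sup>2)" for t w
  proof -
    have "h (z (Suc t)) \<le> h w + ereal (gz (x (Suc t)) (z t) \<bullet> (w - z (Suc t)) + \<eta>z t/2 * (norm (w - z t))\<^sup>2 - \<eta>z t/2 * (norm (z (Suc t) - z t))\<^sup>2)"
      by (rule prox_ineq[OF pz ezpos nmh])
    also have "\<dots> \<le> h w + ereal (gz (x (Suc t)) (z t) \<bullet> (w - z (Suc t)) + E/2 * (norm (w - z t))\<^sup>2)"
    proof (rule add_left_mono)
      have "\<eta>z t/2 * (norm (w - z t))\<^sup>2 \<le> E/2 * (norm (w - z t))\<^sup>2"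
        using ez_b[of t] by (intro mult_right_mono) auto
      moreover have "0 \<le> \<eta>z t/2 * (norm (z (Suc t) - z t))\<^sup>2" using ezpos[of t] by simp
      ultimately show "ereal (gz (x (Suc t)) (z t) \<bullet> (w - z (Suc t)) + \<eta>z t/2 * (norm (w - z t))\<^sup>2 - \<eta>z t/2 * (norm (z (Suc t) - z t))\<^sup>2)
          \<le> ereal (gz (x (Suc t)) (z t) \<bullet> (w - z (Suc t)) + E/2 * (norm (w - z t))\<^sup>2)" unfolding ereal_less_eq(3) by linarith
    qed
    finally show ?thesis .
  qed
  have gfin: "g (x (Suc t)) \<noteq> \<infinity>" for t
    using Ig[of t v0] v0 by auto
  have hfin: "h (z (Suc t)) \<noteq> \<infinity>" for t
    using Ih[of t w0] w0 by auto
  define Fs where "Fs = (\<lambda>j. Fobj f g h (x j, z j))"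
  define W where "W t = Max (Fs ` {Suc t - r..t})" for t
  define D where "D t = (norm (x (Suc t) - x t))\<^sup>2 + (norm (z (Suc t) - z t))\<^sup>2" for t
  define cc where "cc = min \<sigma>1 \<sigma>2 * elo / 2"
  have cc_pos: "cc > 0" using \<sigma>1_in \<sigma>2_in elo_pos by (simp add: cc_def)
  have Dnn: "D t \<ge> 0" for t by (simp add: D_def)
  have Weq: "W t = Max ((\<lambda>j. Fobj f g h (x j, z j)) ` {Suc t - r..t})" for t unfolding W_def Fs_def by simp
  have Fseq: "Fs t = Fobj f g h (x t, z t)" for t unfolding Fs_def by simp
  have fin_win: "finite (Fs ` {Suc t - r..t})" "Fs ` {Suc t - r..t} \<noteq> {}" for t using win[of t] by auto
  have acc2: "Fs (Suc t) \<le> W t - ereal (cc * D t)" for t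
  proof -
    have "Fs (Suc t) \<le> W t - ereal (\<sigma>1 / 2 * \<eta>x t * (norm (x (Suc t) - x t))\<^sup>2)
               - ereal (\<sigma>2 / 2 * \<eta>z t * (norm (z (Suc t) - z t))\<^sup>2)"
      using accept[of t] unfolding Weq[symmetric] Fseq[symmetric] W_def[symmetric] .
    also have "\<dots> \<le> W t - ereal (cc * D t)"
    proof (rule ereal_sub2)
      have "min \<sigma>1 \<sigma>2 * elo \<le> \<sigma>1 * \<eta>x t" using ex_b[of t] \<sigma>1_in \<sigma>2_in elo_pos
        by (intro mult_mono) auto
      then have c1: "cc \<le> \<sigma>1 / 2 * \<eta>x t" unfolding cc_def by simp
      have "min \<sigma>1 \<sigma>2 * elo \<le> \<sigma>2 * \<eta>z t" using ez_b[of t] \<sigma>1_in \<sigma>2_in elo_pos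
        by (intro mult_mono) auto
      then have c2: "cc \<le> \<sigma>2 / 2 * \<eta>z t" unfolding cc_def by simp
      have "cc * (norm (x (Suc t) - x t))\<^sup>2 \<le> \<sigma>1 / 2 * \<eta>x t * (norm (x (Suc t) - x t))\<^sup>2"
        using c1 by (intro mult_right_mono) auto
      moreover have "cc * (norm (z (Suc t) - z t))\<^sup>2 \<le> \<sigma>2 / 2 * \<eta>z t * (norm (z (Suc t) - z t))\<^sup>2"
        using c2 by (intro mult_right_mono) auto
      ultimately show "cc * D t \<le> \<sigma>1 / 2 * \<eta>x t * (norm (x (Suc t) - x t))\<^sup>2 + \<sigma>2 / 2 * \<eta>z t * (norm (z (Suc t) - z t))\<^sup>2"
        unfolding D_def by (simp add: distrib_left)
    qed
    finally show ?thesis .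
  qed
  have Wmono: "W (Suc t) \<le> W t" for t
    unfolding W_def[of "Suc t"]
  proof (rule Max.boundedI[OF fin_win])
    fix a assume "a \<in> Fs ` {Suc (Suc t) - r..Suc t}"
    then obtain j where j: "j \<in> {Suc (Suc t) - r..Suc t}" "a = Fs j" by blast
    show "a \<le> W t"
    proof (cases "j = Suc t")
      case True
      have "0 \<le> cc * D t" using cc_pos Dnn[of t] by simp
      then have "W t - ereal (cc * D t) \<le> W t" by (rule ereal_sub_nonneg)
      then show ?thesis using j acc2[of t] True by (metis order_trans)
    next
      case False
      then have "j \<in> {Suc t - r..t}" using j by auto
      then show ?thesis unfolding j(2) W_def by (intro Max_ge fin_win) auto
    qed
  qed
  have Wdec: "W t \<le> W r" if "r \<le> t" for t
    using lift_Suc_antimono_le[of W, OF Wmono that] .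
  have Fs_nm: "Fs t \<noteq> -\<infinity>" for t using c0[of "(x t, z t)"] unfolding Fs_def by auto
  have Fs_fin: "Fs (Suc t) \<noteq> \<infinity>" for t
  proof -
    obtain a where a: "g (x (Suc t)) = ereal a" using gfin[of t] nmg[of "x (Suc t)"] by (cases "g (x (Suc t))") auto
    obtain b where b: "h (z (Suc t)) = ereal b" using hfin[of t] nmh[of "z (Suc t)"] by (cases "h (z (Suc t))") auto
    show ?thesis unfolding Fs_def Fobj_def using a b by simp
  qed
  define Fr where "Fr t = real_of_ereal (Fs t)" for t
  define Wr where "Wr t = real_of_ereal (W t)" for t
  have Fs_real: "Fs t = ereal (Fr t)" if "1 \<le> t" for t
  proof -
    have "t = Suc (t - 1)" using that by simp
    then have "Fs t \<noteq> \<infinity>" using Fs_fin[of "t - 1"] by metis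
    then have "\<bar>Fs t\<bar> \<noteq> \<infinity>" using Fs_nm[of t] by (cases "Fs t") simp_all
    then show ?thesis unfolding Fr_def by (simp add: ereal_real)
  qed
  have W_in: "W t \<in> Fs ` {Suc t - r..t}" for t unfolding W_def by (rule Max_in[OF fin_win])
  have W_real: "W t = ereal (Wr t)" if "r \<le> t" for t
  proof -
    obtain j where j: "j \<in> {Suc t - r..t}" "W t = Fs j" using W_in[of t] by blast
    then have "1 \<le> j" using that by auto
    then have "Fs j = ereal (Fr j)" by (rule Fs_real)
    then have e: "W t = ereal (Fr j)" using j(2) by simp
    then show ?thesis unfolding Wr_def by simp
  qed
  have Fs_le_Wr: "Fs t \<le> W r" if "1 \<le> t" for t
  proof (cases "t \<le> r")
    case True
    then have "t \<in> {Suc r - r..r}" using that by auto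
    then show ?thesis unfolding W_def by (intro Max_ge fin_win) auto
  next
    case False
    then obtain t' where t': "t = Suc t'" "r \<le> t'" using False by (cases t) auto
    have "Fs t \<le> W t' - ereal (cc * D t')" using acc2[of t'] t' by simp
    also have "\<dots> \<le> W t'" using cc_pos Dnn[of t'] by (intro ereal_sub_nonneg) simp
    also have "\<dots> \<le> W r" by (rule Wdec[OF t'(2)])
    finally show ?thesis .
  qed
  have accR: "Fr (Suc t) \<le> Wr t - cc * D t" if "r \<le> t" for t
  proof -
    have "ereal (Fr (Suc t)) \<le> ereal (Wr t) - ereal (cc * D t)"
      using acc2[of t] Fs_real[of "Suc t"] W_real[OF that] by simp
    then show ?thesis by simp
  qed
  have WrMono: "Wr (Suc t) \<le> Wr t" if "r \<le> t" for t
  proof -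
    have "ereal (Wr (Suc t)) \<le> ereal (Wr t)"
      using Wmono[of t] W_real[OF that] W_real[of "Suc t"] that by simp
    then show ?thesis by simp
  qed
  have Wr_lb: "c0 \<le> Wr t" if "r \<le> t" for t
  proof -
    have "ereal c0 \<le> Fs t" using c0 unfolding Fs_def by simp
    also have "\<dots> \<le> W t" unfolding W_def by (intro Max_ge fin_win) (use win in auto)
    finally show ?thesis using W_real[OF that] by simp
  qed
  have "decseq (\<lambda>n. Wr (n + r))"
    unfolding decseq_Suc_iff using WrMono by simp
  moreover have "\<forall>i. c0 \<le> Wr (i + r)" using Wr_lb by simp
  ultimately obtain Wst where Wst: "(\<lambda>n. Wr (n + r)) \<longlonglongrightarrow> Wst"
    using decseq_convergent[of "\<lambda>n. Wr (n + r)" c0] by blast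
  then have Wlim: "Wr \<longlonglongrightarrow> Wst" by (rule LIMSEQ_offset)
  define ell where "ell t = (SOME j. j \<in> {Suc t - r..t} \<and> Fs j = W t)" for t
  have hell: "Suc t - r \<le> ell t \<and> ell t \<le> t \<and> Fr (ell t) = Wr t" if "r \<le> t" for t
  proof -
    have "\<exists>j. j \<in> {Suc t - r..t} \<and> Fs j = W t" using W_in[of t] by auto
    then have "ell t \<in> {Suc t - r..t} \<and> Fs (ell t) = W t" unfolding ell_def by (rule someI_ex)
    then show ?thesis unfolding Fr_def Wr_def by auto
  qed
  define S where "S = Fobj f g h -` {..W r} \<inter> K"
  have clS: "closed S"
    unfolding S_def
    by (rule continuous_on_closed_vimage[OF compact_imp_closed[OF K_compact], THEN iffD1, OF F_cont, rule_format, OF closed_atMost])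
  have cS: "compact S"
  proof -
    have "compact (K \<inter> S)" by (rule compact_Int_closed[OF K_compact clS])
    moreover have "K \<inter> S = S" unfolding S_def by auto
    ultimately show ?thesis by simp
  qed
  define G where "G p = real_of_ereal (Fobj f g h p)" for p
  have Wr_fin: "W r \<noteq> \<infinity>" using W_real[of r] by simp
  have GS: "continuous_on S G"
    unfolding G_def
  proof (rule continuous_on_compose2[OF continuous_on_real continuous_on_subset[OF F_cont]])
    show "S \<subseteq> K" unfolding S_def by auto
    show "Fobj f g h ` S \<subseteq> UNIV - {\<infinity>, - \<infinity>}"
    proof
      fix q assume "q \<in> Fobj f g h ` S"
      then obtain p where p: "p \<in> S" "q = Fobj f g h p" by blast
      have "q \<le> W r" using p unfolding S_def by auto
      moreover have "q \<ge> ereal c0" using p c0 by simp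
      ultimately show "q \<in> UNIV - {\<infinity>, - \<infinity>}" using Wr_fin by auto
    qed
  qed
  have uS: "uniformly_continuous_on S G" by (rule compact_uniformly_continuous[OF GS cS])
  have Dlim: "D \<longlonglongrightarrow> 0"
  proof (rule gll[OF r_ge accR cc_pos Dnn Wlim hell uS])
    show "(x t, z t) \<in> S" if "1 \<le> t" for t
      using K_contains Fs_le_Wr[OF that] unfolding S_def Fs_def by auto
    show "G (x t, z t) = Fr t" if "1 \<le> t" for t unfolding G_def Fr_def Fs_def by simp
    show "dist (x t, z t) (x (Suc t), z (Suc t)) \<le> sqrt (D t)" for t
      unfolding dist_Pair_Pair D_def by (simp add: dist_norm norm_minus_commute)
  qed
  obtain s where s: "strict_mono s" "(\<lambda>t. (x (s t), z (s t))) \<longlonglongrightarrow> (xs, zs)" using acc by blast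
  have xs_lim: "(\<lambda>t. x (s t)) \<longlonglongrightarrow> xs" using tendsto_fst[OF s(2)] by simp
  have zs_lim: "(\<lambda>t. z (s t)) \<longlonglongrightarrow> zs" using tendsto_snd[OF s(2)] by simp
  have sqD: "(\<lambda>t. sqrt (D t)) \<longlonglongrightarrow> 0" using tendsto_real_sqrt[OF Dlim] by simp
  have dx0: "(\<lambda>t. x (Suc t) - x t) \<longlonglongrightarrow> 0"
  proof (rule Lim_null_comparison[OF _ sqD])
    show "eventually (\<lambda>t. norm (x (Suc t) - x t) \<le> sqrt (D t)) sequentially"
      by (intro always_eventually allI real_le_rsqrt) (simp add: D_def)
  qed
  have dz0: "(\<lambda>t. z (Suc t) - z t) \<longlonglongrightarrow> 0"
  proof (rule Lim_null_comparison[OF _ sqD])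
    show "eventually (\<lambda>t. norm (z (Suc t) - z t) \<le> sqrt (D t)) sequentially"
      by (intro always_eventually allI real_le_rsqrt) (simp add: D_def)
  qed
  have xs1: "(\<lambda>t. x (Suc (s t))) \<longlonglongrightarrow> xs"
  proof -
    have "(\<lambda>t. x (s t) + (x (Suc (s t)) - x (s t))) \<longlonglongrightarrow> xs + 0"
      using LIMSEQ_subseq_LIMSEQ[OF dx0 s(1)] by (intro tendsto_add xs_lim) (simp add: o_def)
    then show ?thesis by simp
  qed
  have zs1: "(\<lambda>t. z (Suc (s t))) \<longlonglongrightarrow> zs"
  proof -
    have "(\<lambda>t. z (s t) + (z (Suc (s t)) - z (s t))) \<longlonglongrightarrow> zs + 0"
      using LIMSEQ_subseq_LIMSEQ[OF dz0 s(1)] by (intro tendsto_add zs_lim) (simp add: o_def)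
    then show ?thesis by simp
  qed
  have gx1: "(\<lambda>t. gx (x (s t)) (z (s t))) \<longlonglongrightarrow> gx xs zs"
    using lip_tendsto[OF f_lip xs_lim zs_lim] by blast
  have gz1: "(\<lambda>t. gz (x (Suc (s t))) (z (s t))) \<longlonglongrightarrow> gz xs zs"
    using lip_tendsto[OF f_lip xs1 zs_lim] by blast
  have Ig_lim: "g xs \<le> g v + ereal (gx xs zs \<bullet> (v - xs) + E/2 * (norm (v - xs))\<^sup>2)" for v
  proof (cases "g v")
    case PInf then show ?thesis by simp
  next
    case MInf then show ?thesis using nmg by simp
  next
    case (real b)
    have "g xs \<le> ereal (b + (gx xs zs \<bullet> (v - xs) + E/2 * (norm (v - xs))\<^sup>2))"
    proof (rule lsc_lim[OF g_lsc xs1])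
      show "eventually (\<lambda>t. g (x (Suc (s t))) \<le> ereal (b + (gx (x (s t)) (z (s t)) \<bullet> (v - x (Suc (s t))) + E/2 * (norm (v - x (s t)))\<^sup>2))) sequentially"
      proof (intro always_eventually allI)
        fix t
        show "g (x (Suc (s t))) \<le> ereal (b + (gx (x (s t)) (z (s t)) \<bullet> (v - x (Suc (s t))) + E/2 * (norm (v - x (s t)))\<^sup>2))"
          using Ig[of "s t" v] real by simp
      qed
      show "(\<lambda>t. b + (gx (x (s t)) (z (s t)) \<bullet> (v - x (Suc (s t))) + E/2 * (norm (v - x (s t)))\<^sup>2))
          \<longlonglongrightarrow> b + (gx xs zs \<bullet> (v - xs) + E/2 * (norm (v - xs))\<^sup>2)"
        by (intro tendsto_intros gx1 xs1 xs_lim)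
    qed
    then show ?thesis using real by simp
  qed
  have Ih_lim: "h zs \<le> h w + ereal (gz xs zs \<bullet> (w - zs) + E/2 * (norm (w - zs))\<^sup>2)" for w
  proof (cases "h w")
    case PInf then show ?thesis by simp
  next
    case MInf then show ?thesis using nmh by simp
  next
    case (real b)
    have "h zs \<le> ereal (b + (gz xs zs \<bullet> (w - zs) + E/2 * (norm (w - zs))\<^sup>2))"
    proof (rule lsc_lim[OF h_lsc zs1])
      show "eventually (\<lambda>t. h (z (Suc (s t))) \<le> ereal (b + (gz (x (Suc (s t))) (z (s t)) \<bullet> (w - z (Suc (s t))) + E/2 * (norm (w - z (s t)))\<^sup>2))) sequentially"
      proof (intro always_eventually allI)
        fix t
        show "h (z (Suc (s t))) \<le> ereal (b + (gz (x (Suc (s t))) (z (s t)) \<bullet> (w - z (Suc (s t))) + E/2 * (norm (w - z (s t)))\<^sup>2))"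
          using Ih[of "s t" w] real by simp
      qed
      show "(\<lambda>t. b + (gz (x (Suc (s t))) (z (s t)) \<bullet> (w - z (Suc (s t))) + E/2 * (norm (w - z (s t)))\<^sup>2))
          \<longlonglongrightarrow> b + (gz xs zs \<bullet> (w - zs) + E/2 * (norm (w - zs))\<^sup>2)"
        by (intro tendsto_intros gz1 zs1 zs_lim)
    qed
    then show ?thesis using real by simp
  qed
  have gxs: "g xs \<noteq> \<infinity>"
  proof -
    obtain b where "g v0 = ereal b" using v0 nmg[of v0] by (cases "g v0") auto
    then show ?thesis using Ig_lim[of v0] by auto
  qed
  have hzs: "h zs \<noteq> \<infinity>"
  proof -
    obtain b where "h w0 = ereal b" using w0 nmh[of w0] by (cases "h w0") auto
    then show ?thesis using Ih_lim[of w0] by auto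
  qed
  obtain a where ga: "g xs = ereal a" using gxs nmg[of xs] by (cases "g xs") auto
  obtain b where hb: "h zs = ereal b" using hzs nmh[of zs] by (cases "h zs") auto
  show ?thesis
    by (rule stationary_from_ineq[OF f_grad nmg nmh ga hb g_dd[OF gxs] h_dd[OF hzs] Ig_lim Ih_lim])
qed

end
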